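(* Let $G$ be a directed multigraph, let $s$ and $t$ be two distinct vertices, let $S$ be the latest $(s,t)$-mincut, let $R$ be the set of vertices reachable from $s$ in the induced subgraph $G[S]$, and let $x$ be an exit point of $S$ with $x\neq t$. Then $\lambda(R\cup\{x\},t)>\mathit{out}(S)$.
   Context: For a vertex set $S$, $\mathit{out}(S)$ is the number of edges $(x,y)$ with $x\in S$, $y\notin S$ (outgoing edges of $S$); an exit point of $S$ is the head of an outgoing edge of $S$. For disjoint vertex sets $X,Y$, $\lambda(X,Y)$ is the minimum of $\mathit{out}(S)$ over vertex sets $S$ with $X\subseteq S$, $S\cap Y=\emptyset$ (single vertices are identified with singletons). An $(s,t)$-mincut is a set $S$ with $s\in S$, $t\notin S$, $\mathit{out}(S)=\lambda(s,t)$; the latest $(s,t)$-mincut is the inclusion-wise maximum $(s,t)$-mincut (which exists). *)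

theory Defs
  imports "Graph_Theory.Digraph" "Graph_Theory.Digraph_Component"
begin

(* Directed multigraph: a finite digraph in the sense of Graph_Theory (parallel arcs allowed).
   Vertex sets S are subsets of verts G. *)

definition out_deg_set :: "('a,'b) pre_digraph \<Rightarrow> 'a set \<Rightarrow> nat" where
  "out_deg_set G S = card {e \<in> arcs G. tail G e \<in> S \<and> head G e \<notin> S}"

definition is_exit_point :: "('a,'b) pre_digraph \<Rightarrow> 'a set \<Rightarrow> 'a \<Rightarrow> bool" where
  "is_exit_point G S x \<longleftrightarrow> (\<exists>e \<in> arcs G. tail G e \<in> S \<and> head G e \<notin> S \<and> head G e = x)"

definition lambda_conn :: "('a,'b) pre_digraph \<Rightarrow> 'a set \<Rightarrow> 'a set \<Rightarrow> nat" where
  "lambda_conn G X Y = Min {out_deg_set G S | S. X \<subseteq> S \<and> S \<subseteq> verts G \<and> S \<inter> Y = {}}"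

definition is_st_mincut :: "('a,'b) pre_digraph \<Rightarrow> 'a \<Rightarrow> 'a \<Rightarrow> 'a set \<Rightarrow> bool" where
  "is_st_mincut G s t S \<longleftrightarrow> S \<subseteq> verts G \<and> s \<in> S \<and> t \<notin> S
     \<and> out_deg_set G S = lambda_conn G {s} {t}"

definition is_latest_st_mincut :: "('a,'b) pre_digraph \<Rightarrow> 'a \<Rightarrow> 'a \<Rightarrow> 'a set \<Rightarrow> bool" where
  "is_latest_st_mincut G s t S \<longleftrightarrow> is_st_mincut G s t S
     \<and> (\<forall>S'. is_st_mincut G s t S' \<longrightarrow> S' \<subseteq> S)"

end

theory Submission
  imports Defs
begin

lemma lam_fin:
  assumes "finite (verts G)"
  shows "finite {out_deg_set G S | S. X \<subseteq> S \<and> S \<subseteq> verts G \<and> S \<inter> Y = {}}"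
proof -
  have "{out_deg_set G S | S. X \<subseteq> S \<and> S \<subseteq> verts G \<and> S \<inter> Y = {}} \<subseteq> out_deg_set G ` Pow (verts G)"
    by auto
  then show ?thesis using assms finite_subset by blast
qed

lemma lam_le:
  assumes "finite (verts G)" "X \<subseteq> T" "T \<subseteq> verts G" "T \<inter> Y = {}"
  shows "lambda_conn G X Y \<le> out_deg_set G T"
  unfolding lambda_conn_def
  by (rule Min_le[OF lam_fin[OF assms(1)]]) (use assms in blast)

lemma lam_attained:
  assumes "finite (verts G)" "X \<subseteq> T" "T \<subseteq> verts G" "T \<inter> Y = {}"
  shows "\<exists>T'. X \<subseteq> T' \<and> T' \<subseteq> verts G \<and> T' \<inter> Y = {} \<and> out_deg_set G T' = lambda_conn G X Y"
proof -
  have "lambda_conn G X Y \<in> {out_deg_set G S | S. X \<subseteq> S \<and> S \<subseteq> verts G \<and> S \<inter> Y = {}}"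
    unfolding lambda_conn_def
    by (rule Min_in[OF lam_fin[OF assms(1)]]) (use assms in blast)
  then show ?thesis by auto
qed

theorem mainTheorem6:
  fixes G :: "('a,'b) pre_digraph" and s t x :: 'a and S R :: "'a set"
  assumes "fin_digraph G"
    and "s \<in> verts G" and "t \<in> verts G" and "s \<noteq> t"
    and "is_latest_st_mincut G s t S"
    and "R = {v. s \<rightarrow>\<^sup>*\<^bsub>induce_subgraph G S\<^esub> v}"
    and "is_exit_point G S x" and "x \<noteq> t"
  shows "lambda_conn G (R \<union> {x}) {t} > out_deg_set G S"
proof -
  interpret fin_digraph G by fact
  have fv: "finite (verts G)" by simp
  have S: "S \<subseteq> verts G" "s \<in> S" "t \<notin> S" "out_deg_set G S = lambda_conn G {s} {t}"
    using assms(5) unfolding is_latest_st_mincut_def is_st_mincut_def by auto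
  have lat: "\<And>S'. is_st_mincut G s t S' \<Longrightarrow> S' \<subseteq> S"
    using assms(5) unfolding is_latest_st_mincut_def by auto
  obtain e where e: "e \<in> arcs G" "tail G e \<in> S" "head G e \<notin> S" "head G e = x"
    using assms(7) unfolding is_exit_point_def by auto
  have xV: "x \<in> verts G" using e by auto
  have xS: "x \<notin> S" using e by auto
  have RS: "R \<subseteq> S"
  proof
    fix v assume "v \<in> R"
    then have "s \<rightarrow>\<^sup>*\<^bsub>induce_subgraph G S\<^esub> v" using assms(6) by auto
    then have "v \<in> verts (induce_subgraph G S)" by (rule Digraph.reachable_in_vertsE)
    then show "v \<in> S" by simp
  qed
  have "s \<in> verts (induce_subgraph G S)" using S(2) by simp
  then have "s \<rightarrow>\<^sup>*\<^bsub>induce_subgraph G S\<^esub> s" unfolding reachable_def by auto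
  then have sR: "s \<in> R" using assms(6) by simp
  have feas: "R \<union> {x} \<subseteq> R \<union> {x}" "R \<union> {x} \<subseteq> verts G" "(R \<union> {x}) \<inter> {t} = {}"
    using RS S xV assms(8) by auto
  obtain T where T: "R \<union> {x} \<subseteq> T" "T \<subseteq> verts G" "T \<inter> {t} = {}"
      "out_deg_set G T = lambda_conn G (R \<union> {x}) {t}"
    using lam_attained[OF fv feas] by blast
  have ge: "lambda_conn G {s} {t} \<le> out_deg_set G T"
    by (rule lam_le[OF fv]) (use T sR in auto)
  show ?thesis
  proof (rule ccontr)
    assume "\<not> ?thesis"
    then have "out_deg_set G T = lambda_conn G {s} {t}" using ge T(4) S(4) by linarith
    then have "is_st_mincut G s t T" unfolding is_st_mincut_def using T sR by auto
    then have "T \<subseteq> S" by (rule lat)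
    then show False using T(1) xS by auto
  qed
qed

end
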